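(* Let $X$ and $Y$ be uncertain variables on a common set $\Omega$ with finite ranges. Then $$\mathcal{L}_\star(X\rightarrow Y)=\log_2\Big(|[\![X]\!]| - \min_{y\in[\![Y]\!]} |[\![X\mid Y(\omega)=y]\!]| + 1\Big).$$
   Context: Let $\Omega$ be a set. An uncertain variable (uv) is a map $X:\Omega\to\mathbb{X}$ into some set; all uvs considered have finite ranges. The range of $X$ is $[\![X]\!]:=\{X(\omega):\omega\in\Omega\}$; the conditional range is $[\![X\mid Y(\omega)=y]\!]:=\{X(\omega):\omega\in\Omega,\ Y(\omega)=y\}$. The non-stochastic brute-force guessing leakage from a uv $U$ to a uv $Y$ is $$\mathcal{L}(U\rightarrow Y):=\log_2\left(\frac{|[\![U]\!]|}{\min_{y\in[\![Y]\!]}|[\![U\mid Y(\omega)=y]\!]|}\right).$$ The maximal non-stochastic brute-force leakage from $X$ to $Y$ is $$\mathcal{L}_\star(X\rightarrow Y):=\sup_{g}\ \mathcal{L}(g\circ X\rightarrow Y),$$ where the supremum ranges over all finite sets $\mathcal{U}$ and all functions $g:[\![X]\!]\to\mathcal{U}$. *)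

theory Defs
  imports Complex_Main
begin

text \<open>Uncertain variables are maps from the sample type 'o (playing the role of Omega).
  The range of X is range X; the conditional range of U given Y = y is below.\<close>

definition cond_range :: "('o \<Rightarrow> 'u) \<Rightarrow> ('o \<Rightarrow> 'y) \<Rightarrow> 'y \<Rightarrow> 'u set" where
  "cond_range U Y y = {U w | w. Y w = y}"

definition bf_leakage :: "('o \<Rightarrow> 'u) \<Rightarrow> ('o \<Rightarrow> 'y) \<Rightarrow> real" where
  "bf_leakage U Y =
     log 2 (real (card (range U)) / real (Min ((\<lambda>y. card (cond_range U Y y)) ` range Y)))"

text \<open>Maximal leakage: supremum over all functions g on the range of X into a finite set.
  Every finite set embeds into nat, and the leakage only depends on g restricted to range X,
  so we range over g :: 'x \<Rightarrow> nat.\<close>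

definition max_bf_leakage :: "('o \<Rightarrow> 'x) \<Rightarrow> ('o \<Rightarrow> 'y) \<Rightarrow> real" where
  "max_bf_leakage X Y = Sup {bf_leakage (g \<circ> X) Y | g :: 'x \<Rightarrow> nat. True}"

end

theory Submission
  imports Defs
begin

lemma cr_sub: "cond_range X Y y \<subseteq> range X"
  unfolding cond_range_def by auto

lemma cr_ne: "y \<in> range Y \<Longrightarrow> cond_range X Y y \<noteq> {}"
  unfolding cond_range_def by auto

lemma cr_comp: "cond_range (g \<circ> X) Y y = g ` cond_range X Y y"
  unfolding cond_range_def by auto

lemma upper:
  fixes X :: "'o \<Rightarrow> 'x" and Y :: "'o \<Rightarrow> 'y" and g :: "'x \<Rightarrow> nat"
  assumes fX: "finite (range X)" and fY: "finite (range Y)"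
  shows "bf_leakage (g \<circ> X) Y \<le>
    log 2 (real (card (range X))
           - real (Min ((\<lambda>y. card (cond_range X Y y)) ` range Y)) + 1)"
proof -
  define A where "A = cond_range X Y"
  define n where "n = card (range X)"
  define m where "m = Min ((\<lambda>y. card (A y)) ` range Y)"
  define d where "d = Min ((\<lambda>y. card (g ` A y)) ` range Y)"
  define k where "k = card (g ` range X)"
  have fA: "finite (A y)" for y using fX cr_sub[of X Y y] finite_subset unfolding A_def by blast
  have "d \<in> (\<lambda>y. card (g ` A y)) ` range Y" unfolding d_def by (rule Min_in) (use fY in auto)
  then obtain y1 where y1: "y1 \<in> range Y" "d = card (g ` A y1)" by blast
  have ne: "A y1 \<noteq> {}" using cr_ne[OF y1(1)] unfolding A_def by blast
  have d1: "d \<ge> 1" using y1 ne fA by (simp add: Suc_le_eq card_gt_0_iff)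
  have mle: "m \<le> card (A y1)" unfolding m_def by (rule Min_le) (use fY y1 in auto)
  have sub: "A y1 \<subseteq> range X" unfolding A_def by (rule cr_sub)
  have cA: "card (A y1) \<le> n" unfolding n_def by (rule card_mono[OF fX sub])
  have "g ` range X = g ` A y1 \<union> g ` (range X - A y1)" using sub by auto
  hence "k \<le> card (g ` A y1) + card (g ` (range X - A y1))"
    unfolding k_def by (metis card_Un_le)
  also have "card (g ` (range X - A y1)) \<le> card (range X - A y1)"
    using fX by (intro card_image_le) auto
  also have "card (range X - A y1) = n - card (A y1)"
    unfolding n_def using card_Diff_subset[OF fA sub] .
  finally have kle: "real k \<le> real d + (real n - real m)" using y1 mle cA by linarith
  have k1: "k \<ge> 1" unfolding k_def using fX by (simp add: Suc_le_eq card_gt_0_iff)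
  have "real k \<le> real d * (real n - real m + 1)"
  proof -
    have "real n - real m \<ge> 0" using mle cA by simp
    hence "(real n - real m) * 1 \<le> (real n - real m) * real d" using d1 by (intro mult_left_mono) auto
    thus ?thesis using kle by (simp add: algebra_simps)
  qed
  hence r: "real k / real d \<le> real n - real m + 1" using d1 by (simp add: divide_le_eq mult.commute)
  have pos: "0 < real k / real d" using k1 d1 by simp
  have "bf_leakage (g \<circ> X) Y = log 2 (real k / real d)"
    unfolding bf_leakage_def k_def d_def A_def cr_comp by (simp add: image_comp)
  also have "\<dots> \<le> log 2 (real n - real m + 1)" using r pos by simp
  finally show ?thesis unfolding n_def m_def A_def .
qed

theorem proposition4:
  fixes X :: "'o \<Rightarrow> 'x" and Y :: "'o \<Rightarrow> 'y"
  assumes "finite (range X)" and "finite (range Y)"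
  shows "max_bf_leakage X Y =
    log 2 (real (card (range X))
           - real (Min ((\<lambda>y. card (cond_range X Y y)) ` range Y)) + 1)"
proof -
  note fX = assms(1) and fY = assms(2)
  define A where "A = cond_range X Y"
  define n where "n = card (range X)"
  define m where "m = Min ((\<lambda>y. card (A y)) ` range Y)"
  have fA: "finite (A y)" for y using fX cr_sub[of X Y y] finite_subset unfolding A_def by blast
  have "m \<in> (\<lambda>y. card (A y)) ` range Y" unfolding m_def by (rule Min_in) (use fY in auto)
  then obtain y0 where y0: "y0 \<in> range Y" "m = card (A y0)" by blast
  have sub: "A y0 \<subseteq> range X" unfolding A_def by (rule cr_sub)
  have ne: "A y0 \<noteq> {}" using cr_ne[OF y0(1)] unfolding A_def by blast
  obtain f :: "'x \<Rightarrow> nat" and N where f: "inj_on f (range X)"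
    using finite_imp_inj_to_nat_seg[OF fX] by blast
  define g where "g = (\<lambda>x. if x \<in> A y0 then 0 else Suc (f x))"
  have img: "g ` range X = {0} \<union> (Suc \<circ> f) ` (range X - A y0)"
    using sub ne unfolding g_def by auto
  have inj2: "inj_on (Suc \<circ> f) (range X - A y0)"
    using f by (auto simp: inj_on_def)
  have "card (g ` range X) = 1 + card (range X - A y0)"
    unfolding img using fX by (subst card_Un_disjoint) (auto simp: card_image[OF inj2, simplified comp_def])
  also have "card (range X - A y0) = n - m"
    unfolding n_def y0(2) using card_Diff_subset[OF fA sub] .
  finally have ck: "card (g ` range X) = 1 + (n - m)" .
  have mn: "m \<le> n" unfolding n_def y0(2) by (rule card_mono[OF fX sub])
  have g1: "card (g ` A y0) = 1"
  proof -
    have "g ` A y0 = {0}" using ne unfolding g_def by auto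
    thus ?thesis by simp
  qed
  have dmin: "Min ((\<lambda>y. card (g ` A y)) ` range Y) = 1"
  proof (rule antisym)
    show "Min ((\<lambda>y. card (g ` A y)) ` range Y) \<le> 1"
      using g1 y0(1) fY by (metis (no_types, lifting) Min_le finite_imageI image_eqI)
    show "1 \<le> Min ((\<lambda>y. card (g ` A y)) ` range Y)"
      using fY fA cr_ne[of _ Y X] unfolding A_def
      by (subst Min_ge_iff) (auto simp: Suc_le_eq card_gt_0_iff)
  qed
  have val: "bf_leakage (g \<circ> X) Y = log 2 (real n - real m + 1)"
    unfolding bf_leakage_def cr_comp image_comp[symmetric]
    using dmin ck mn unfolding A_def by (simp add: image_comp add.commute)
  show ?thesis
    unfolding max_bf_leakage_def
  proof (rule cSup_eq_maximum)
    show "log 2 (real (card (range X)) - real (Min ((\<lambda>y. card (cond_range X Y y)) ` range Y)) + 1)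
      \<in> {bf_leakage (h \<circ> X) Y |h :: 'x \<Rightarrow> nat. True}"
      using val[symmetric] unfolding n_def m_def A_def by (intro CollectI exI[of _ g]) simp
    show "x \<le> log 2 (real (card (range X)) - real (Min ((\<lambda>y. card (cond_range X Y y)) ` range Y)) + 1)"
      if "x \<in> {bf_leakage (h \<circ> X) Y |h :: 'x \<Rightarrow> nat. True}" for x
      using that upper[OF fX fY] by blast
  qed
qed

end
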